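(* Let $\Omega\subset\mathbb{R}^n$ ($n\ge 2$) be a domain, let $1\le s<\infty$, let $T=T_{l,r,c}$ be an essential tube for $\Omega$ with corresponding component $\Omega_T$, and let $z_0\in\Omega$ be any point not in $\Omega_T$. Then \[ \int_{\Omega_T} k(z,z_0;\Omega)^s\,dz \;\ge\; C(s,n)\, c\, r^{n}\left(\frac{l}{r}\right)^{s+1}, \] where $C(s,n)>0$ is a constant depending only on $s$ and $n$.
   Context: For $k\ge1$, $D_r^k\subset\mathbb{R}^k$ denotes the closed $k$-dimensional disk of radius $r$ centered at the origin. A tube $T_{l,r}$ in $\mathbb{R}^n$ is the image under a Euclidean (rigid) transformation of the cylinder $[0,l]\times D_r^{n-1}$; the images of $\{0\}\times D_r^{n-1}$ and $\{l\}\times D_r^{n-1}$ are its ends, and the image of $[0,l]\times\partial D_r^{n-1}$ is its wall. For $t\in[0,l]$, the $t$-th slice of a subset of $T$ is its intersection with the image of $\{t\}\times D_r^{n-1}$. An essential tube $T=T_{l,r,c}$ for a domain $\Omega$ is a tube $T_{l,r}$ such that $T\cap\Omega$ has a connected component $\Omega_T$ with: (i) $\Omega_T$ does not meet the wall of $T$; (ii) $c>0$ and for every $t\in[0,l]$ the $(n-1)$-dimensional measure of the $t$-th slice of $\Omega_T$ is at least $c$ times the $(n-1)$-dimensional measure of $D_r^{n-1}$. The quasihyperbolic distance is $k(z,z_0;\Omega)=\inf_\gamma\int_\gamma \frac{d\sigma}{d(\zeta,\partial\Omega)}$, the infimum over rectifiable curves $\gamma\subset\Omega$ joining $z$ to $z_0$;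 $dz$ is Lebesgue measure. *)

theory Defs
  imports "HOL-Analysis.Analysis"
begin

definition curve_variation :: "(real \<Rightarrow> 'a::metric_space) \<Rightarrow> real \<Rightarrow> real \<Rightarrow> real" where
  "curve_variation g a b =
     Sup {(\<Sum>i<k. dist (g (p (Suc i))) (g (p i))) | k p.
            p 0 = a \<and> p k = b \<and> (\<forall>i<k. p i \<le> p (Suc i))}"

definition rectifiable_path :: "(real \<Rightarrow> 'a::metric_space) \<Rightarrow> bool" where
  "rectifiable_path g \<longleftrightarrow> path g \<and>
     bdd_above {(\<Sum>i<k. dist (g (p (Suc i))) (g (p i))) | k p.
            p 0 = 0 \<and> p k = 1 \<and> (\<forall>i<k. p i \<le> p (Suc i))}"

text \<open>Line integral with respect to arc length: Lebesgue-Stieltjes integral of f o g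
  against the arc-length function t |-> length of g on [0,t].\<close>
definition arclength_integral :: "('a::metric_space \<Rightarrow> real) \<Rightarrow> (real \<Rightarrow> 'a) \<Rightarrow> ennreal" where
  "arclength_integral f g =
     (\<integral>\<^sup>+ t. ennreal (f (g t))
        \<partial>interval_measure (\<lambda>t. curve_variation g 0 (max 0 (min 1 t))))"

definition qh_dist :: "'a::euclidean_space set \<Rightarrow> 'a \<Rightarrow> 'a \<Rightarrow> real" where
  "qh_dist \<Omega> z z0 = enn2real
     (INF g \<in> {g. rectifiable_path g \<and> path_image g \<subseteq> \<Omega> \<and>
                  pathstart g = z \<and> pathfinish g = z0}.
        arclength_integral (\<lambda>\<zeta>. 1 / infdist \<zeta> (frontier \<Omega>)) g)"

text \<open>R^n is modelled as real \<times> (real^'m) (so n = CARD('m) + 1 \<ge> 2); the first coordinate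
  is the axis of the standard cylinder [0,l] \<times> D_r^{n-1}.\<close>
definition rigid :: "('a::metric_space \<Rightarrow> 'a) \<Rightarrow> bool" where
  "rigid f \<longleftrightarrow> (\<forall>x y. dist (f x) (f y) = dist x y)"

definition tube :: "(real \<times> (real^'m) \<Rightarrow> real \<times> (real^'m)) \<Rightarrow> real \<Rightarrow> real \<Rightarrow> (real \<times> (real^'m)) set" where
  "tube f l r = f ` ({0..l} \<times> cball 0 r)"

definition tube_wall :: "(real \<times> (real^'m) \<Rightarrow> real \<times> (real^'m)) \<Rightarrow> real \<Rightarrow> real \<Rightarrow> (real \<times> (real^'m)) set" where
  "tube_wall f l r = f ` ({0..l} \<times> sphere 0 r)"

definition tube_slice :: "(real \<times> (real^'m) \<Rightarrow> real \<times> (real^'m)) \<Rightarrow> real \<Rightarrow> (real \<times> (real^'m)) set \<Rightarrow> real \<Rightarrow> (real^'m) set" where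
  "tube_slice f r S t = {y. norm y \<le> r \<and> f (t, y) \<in> S}"

definition essential_tube :: "(real \<times> (real^'m)) set \<Rightarrow> (real \<times> (real^'m) \<Rightarrow> real \<times> (real^'m))
     \<Rightarrow> real \<Rightarrow> real \<Rightarrow> real \<Rightarrow> (real \<times> (real^'m)) set \<Rightarrow> bool" where
  "essential_tube \<Omega> f l r c \<Omega>T \<longleftrightarrow>
     0 < l \<and> 0 < r \<and> 0 < c \<and> rigid f \<and>
     \<Omega>T \<in> components (tube f l r \<inter> \<Omega>) \<and>
     \<Omega>T \<inter> tube_wall f l r = {} \<and>
     (\<forall>t\<in>{0..l}. measure lebesgue (tube_slice f r \<Omega>T t)
                    \<ge> c * measure lebesgue (cball (0::real^'m) r))"

end

theory Submission
  imports Defs "HOL-Analysis.Analysis"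
begin


definition psums :: "(real \<Rightarrow> 'a::metric_space) \<Rightarrow> real \<Rightarrow> real \<Rightarrow> real set" where
  "psums g a b = {(\<Sum>i<k. dist (g (p (Suc i))) (g (p i))) | k p.
            p 0 = a \<and> p k = b \<and> (\<forall>i<k. p i \<le> p (Suc i))}"

lemma cv_def: "curve_variation g a b = Sup (psums g a b)"
  unfolding curve_variation_def psums_def by simp

lemma sum_lessThan_add_split:
  "(\<Sum>i<m + n. f i) = (\<Sum>i<m. f i) + (\<Sum>i<n. f (m + i))" for f :: "nat \<Rightarrow> real"
  by (induction n) (simp_all add: add.assoc)

lemma chain_mono:
  assumes "\<forall>i<k. p i \<le> p (Suc i)" "i \<le> j" "j \<le> (k::nat)"
  shows "p i \<le> (p j::real)"
  using assms(2,3)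
proof (induction j)
  case 0 then show ?case by simp
next
  case (Suc j)
  show ?case
  proof (cases "i = Suc j")
    case False
    then have "p i \<le> p j" using Suc by simp
    also have "p j \<le> p (Suc j)" using assms(1) Suc.prems by simp
    finally show ?thesis .
  qed simp
qed

lemma psums_nonneg: "x \<in> psums g a b \<Longrightarrow> 0 \<le> x"
  unfolding psums_def by (auto intro!: sum_nonneg)

lemma psums_chord: "a \<le> b \<Longrightarrow> dist (g b) (g a) \<in> psums g a b"
  unfolding psums_def
  by (rule CollectI, rule exI[of _ 1], rule exI[of _ "\<lambda>i. if i = 0 then a else b"]) auto

lemma psums_same: "x \<in> psums g a a \<Longrightarrow> x = 0"
proof -
  assume "x \<in> psums g a a"
  then obtain k p where x: "x = (\<Sum>i<k. dist (g (p (Suc i))) (g (p i)))"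
    and p: "p 0 = a" "p k = a" "\<forall>i<k. p i \<le> p (Suc i)"
    unfolding psums_def by blast
  have "p i = a" if "i \<le> k" for i
    using chain_mono[OF p(3), of 0 i] chain_mono[OF p(3), of i k] that p by simp
  then show ?thesis using x by simp
qed

lemma psums_concat:
  assumes "x \<in> psums g a b" "y \<in> psums g b c"
  shows "x + y \<in> psums g a c"
proof -
  obtain k1 p1 where x: "x = (\<Sum>i<k1. dist (g (p1 (Suc i))) (g (p1 i)))"
    and p1: "p1 0 = a" "p1 k1 = b" "\<forall>i<k1. p1 i \<le> p1 (Suc i)"
    using assms(1) unfolding psums_def by blast
  obtain k2 p2 where y: "y = (\<Sum>i<k2. dist (g (p2 (Suc i))) (g (p2 i)))"
    and p2: "p2 0 = b" "p2 k2 = c" "\<forall>i<k2. p2 i \<le> p2 (Suc i)"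
    using assms(2) unfolding psums_def by blast
  define p where "p i = (if i \<le> k1 then p1 i else p2 (i - k1))" for i
  have pk: "p (k1 + i) = p2 i" for i
    using p1(2) p2(1) by (auto simp: p_def)
  have "(\<Sum>i<k1 + k2. dist (g (p (Suc i))) (g (p i)))
      = (\<Sum>i<k1. dist (g (p (Suc i))) (g (p i))) + (\<Sum>i<k2. dist (g (p (Suc (k1 + i)))) (g (p (k1 + i))))"
    by (rule sum_lessThan_add_split)
  also have "(\<Sum>i<k1. dist (g (p (Suc i))) (g (p i))) = x"
    unfolding x by (rule sum.cong) (auto simp: p_def)
  also have "(\<Sum>i<k2. dist (g (p (Suc (k1 + i)))) (g (p (k1 + i)))) = y"
    unfolding y using pk[of "Suc _"] by (simp add: pk)
  finally have eq: "(\<Sum>i<k1 + k2. dist (g (p (Suc i))) (g (p i))) = x + y" .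
  have mono: "\<forall>i<k1 + k2. p i \<le> p (Suc i)"
  proof (intro allI impI)
    fix i assume i: "i < k1 + k2"
    show "p i \<le> p (Suc i)"
    proof (cases "i < k1")
      case True then show ?thesis using p1(3) by (auto simp: p_def)
    next
      case False
      then obtain j where j: "i = k1 + j" "j < k2" using i by (metis add_less_imp_less_left le_Suc_ex not_less)
      then show ?thesis using pk[of j] pk[of "Suc j"] p2(3) by simp
    qed
  qed
  have "p 0 = a" "p (k1 + k2) = c" using p1 pk[of k2] p2 by (auto simp: p_def)
  then show ?thesis unfolding psums_def
    by (intro CollectI exI[of _ "k1+k2"] exI[of _ p]) (use eq mono in auto)
qed

lemma psums_split:
  assumes "x \<in> psums g a c" "a \<le> b" "b \<le> c"
  shows "\<exists>x1\<in>psums g a b. \<exists>x2\<in>psums g b c. x \<le> x1 + x2"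
proof -
  obtain k p where x: "x = (\<Sum>i<k. dist (g (p (Suc i))) (g (p i)))"
    and p: "p 0 = a" "p k = c" "\<forall>i<k. p i \<le> p (Suc i)"
    using assms(1) unfolding psums_def by blast
  define q1 where "q1 i = min b (p i)" for i
  define q2 where "q2 i = max b (p i)" for i
  have "(\<Sum>i<k. dist (g (q1 (Suc i))) (g (q1 i))) \<in> psums g a b"
    unfolding psums_def using p assms(2,3) by (auto simp: q1_def intro!: exI[of _ k] exI[of _ q1])
  moreover have "(\<Sum>i<k. dist (g (q2 (Suc i))) (g (q2 i))) \<in> psums g b c"
    unfolding psums_def using p assms(2,3) by (auto simp: q2_def intro!: exI[of _ k] exI[of _ q2])
  moreover have "x \<le> (\<Sum>i<k. dist (g (q1 (Suc i))) (g (q1 i))) + (\<Sum>i<k. dist (g (q2 (Suc i))) (g (q2 i)))"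
    unfolding x sum.distrib[symmetric]
  proof (rule sum_mono)
    fix i assume i: "i \<in> {..<k}"
    then have le: "p i \<le> p (Suc i)" using p(3) by simp
    show "dist (g (p (Suc i))) (g (p i)) \<le> dist (g (q1 (Suc i))) (g (q1 i)) + dist (g (q2 (Suc i))) (g (q2 i))"
    proof (cases "p (Suc i) \<le> b")
      case True
      then show ?thesis using le by (simp add: q1_def q2_def)
    next
      case False
      show ?thesis
      proof (cases "b \<le> p i")
        case True
        then show ?thesis using le by (simp add: q1_def q2_def)
      next
        case False': False
        then have "q1 (Suc i) = b" "q1 i = p i" "q2 (Suc i) = p (Suc i)" "q2 i = b"
          using False le by (auto simp: q1_def q2_def)
        then show ?thesis using dist_triangle[of "g (p (Suc i))" "g (p i)" "g b"]
          by (simp add: dist_commute)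
      qed
    qed
  qed
  ultimately show ?thesis by blast
qed

lemma psums_ne: "a \<le> b \<Longrightarrow> psums g a b \<noteq> {}"
  using psums_chord by blast

lemma psums_bdd:
  assumes B: "bdd_above (psums g 0 1)" and "0 \<le> a" "a \<le> b" "b \<le> 1"
  shows "bdd_above (psums g a b)"
proof -
  obtain M where M: "\<And>x. x \<in> psums g 0 1 \<Longrightarrow> x \<le> M" using B unfolding bdd_above_def by blast
  show ?thesis unfolding bdd_above_def
  proof (intro exI ballI)
    fix x assume x: "x \<in> psums g a b"
    have "dist (g a) (g 0) + x + dist (g 1) (g b) \<in> psums g 0 1"
    proof (rule psums_concat[of _ g 0 b])
      show "dist (g a) (g 0) + x \<in> psums g 0 b"
        by (rule psums_concat[OF psums_chord x]) (use assms in auto)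
    qed (rule psums_chord, use assms in auto)
    then have "dist (g a) (g 0) + x + dist (g 1) (g b) \<le> M" by (rule M)
    then show "x \<le> M" by (smt (verit) zero_le_dist)
  qed
qed

lemma cv_upper:
  assumes B: "bdd_above (psums g 0 1)" "0 \<le> a" "a \<le> b" "b \<le> 1" and x: "x \<in> psums g a b"
  shows "x \<le> curve_variation g a b"
  unfolding cv_def by (rule cSup_upper[OF x psums_bdd[OF B]])

lemma cv_chord:
  assumes "bdd_above (psums g 0 1)" "0 \<le> a" "a \<le> b" "b \<le> 1"
  shows "dist (g b) (g a) \<le> curve_variation g a b"
  by (rule cv_upper[OF assms psums_chord[OF assms(3)]])

lemma cv_nonneg:
  assumes "bdd_above (psums g 0 1)" "0 \<le> a" "a \<le> b" "b \<le> 1"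
  shows "0 \<le> curve_variation g a b"
  using cv_chord[OF assms] zero_le_dist order_trans by blast

lemma cv_same: "curve_variation g a a = 0"
proof -
  have "psums g a a = {0}" using psums_same psums_ne[of a a g] by blast
  then show ?thesis unfolding cv_def by simp
qed

lemma cv_additive:
  assumes B: "bdd_above (psums g 0 1)" and abc: "0 \<le> a" "a \<le> b" "b \<le> c" "c \<le> 1"
  shows "curve_variation g a c = curve_variation g a b + curve_variation g b c"
proof (rule antisym)
  show "curve_variation g a c \<le> curve_variation g a b + curve_variation g b c"
    unfolding cv_def[of g a c]
  proof (rule cSup_least[OF psums_ne])
    show "a \<le> c" using abc by simp
    fix x assume "x \<in> psums g a c"
    then obtain x1 x2 where "x1 \<in> psums g a b" "x2 \<in> psums g b c" "x \<le> x1 + x2"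
      using psums_split abc by blast
    moreover have "x1 \<le> curve_variation g a b" "x2 \<le> curve_variation g b c"
      using cv_upper[OF B] calculation abc by auto
    ultimately show "x \<le> curve_variation g a b + curve_variation g b c" by simp
  qed
next
  have "curve_variation g a b \<le> curve_variation g a c - curve_variation g b c"
    unfolding cv_def[of g a b]
  proof (rule cSup_least[OF psums_ne])
    show "a \<le> b" using abc by simp
    fix x1 assume x1: "x1 \<in> psums g a b"
    have "curve_variation g b c \<le> curve_variation g a c - x1"
      unfolding cv_def[of g b c]
    proof (rule cSup_least[OF psums_ne])
      show "b \<le> c" using abc by simp
      fix x2 assume "x2 \<in> psums g b c"
      then have "x1 + x2 \<le> curve_variation g a c"
        using cv_upper[OF B _ _ _ psums_concat[OF x1]] abc by auto
      then show "x2 \<le> curve_variation g a c - x1" by simp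
    qed
    then show "x1 \<le> curve_variation g a c - curve_variation g b c" by simp
  qed
  then show "curve_variation g a b + curve_variation g b c \<le> curve_variation g a c" by simp
qed

lemma cv_mono:
  assumes B: "bdd_above (psums g 0 1)" and abc: "0 \<le> a" "a \<le> b" "b \<le> c" "c \<le> 1"
  shows "curve_variation g a b \<le> curve_variation g a c"
  using cv_additive[OF assms] cv_nonneg[OF B, of b c] abc by simp

lemma cv_rightcont:
  assumes g: "continuous_on {0..1} g" and B: "bdd_above (psums g 0 1)"
    and t: "0 \<le> t" "t < 1" and e: "0 < e"
  shows "\<exists>u>t. u \<le> 1 \<and> curve_variation g t u < e"
proof -
  have "curve_variation g t 1 - e/2 < Sup (psums g t 1)"
    using e unfolding cv_def by simp
  then obtain x where x: "x \<in> psums g t 1" "curve_variation g t 1 - e/2 < x"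
    using less_cSup_iff[OF psums_ne psums_bdd[OF B]] t by force
  obtain k p where xk: "x = (\<Sum>i<k. dist (g (p (Suc i))) (g (p i)))"
    and p: "p 0 = t" "p k = 1" "\<forall>i<k. p i \<le> p (Suc i)"
    using x(1) unfolding psums_def by blast
  obtain \<eta> where \<eta>: "\<eta> > 0" "\<And>u. u \<in> {0..1} \<Longrightarrow> dist u t < \<eta> \<Longrightarrow> dist (g u) (g t) < e/2"
    using g t e unfolding continuous_on_iff by (metis atLeastAtMost_iff half_gt_zero less_eq_real_def)
  define P where "P = (\<lambda>i. p i) ` {i. i \<le> k \<and> t < p i}"
  have finP: "finite (insert (min 1 (t + \<eta>/2)) P)" unfolding P_def by simp
  define u where "u = Min (insert (min 1 (t + \<eta>/2)) P)"
  have Pgt: "\<forall>y\<in>P. t < y" unfolding P_def by auto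
  have ut: "t < u" unfolding u_def using finP Pgt t \<eta> by (simp add: Min_gr_iff)
  have u1: "u \<le> 1" "u \<le> t + \<eta>/2" unfolding u_def using finP
    by (meson Min_le insertI1 min.boundedE)+
  have pge: "t \<le> p i" if "i \<le> k" for i using chain_mono[OF p(3), of 0 i] that p(1) by simp
  have alt: "p i = t \<or> u \<le> p i" if "i \<le> k" for i
  proof (cases "t < p i")
    case True
    then have "p i \<in> P" unfolding P_def using that by blast
    then show ?thesis unfolding u_def using finP by simp
  next
    case False then show ?thesis using pge[OF that] by simp
  qed
  define q where "q i = max u (p i)" for i
  define x' where "x' = (\<Sum>i<k. dist (g (q (Suc i))) (g (q i)))"
  have x'mem: "x' \<in> psums g u 1"
    unfolding psums_def x'_def using p ut u1
    by (intro CollectI exI[of _ k] exI[of _ q]) (auto simp: q_def)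
  define \<psi> where "\<psi> i = dist (g (min u (p i))) (g t)" for i
  have termb: "dist (g (p (Suc i))) (g (p i)) \<le> dist (g (q (Suc i))) (g (q i)) + (\<psi> (Suc i) - \<psi> i)"
    if i: "i < k" for i
  proof -
    have le: "p i \<le> p (Suc i)" using p(3) i by simp
    consider "p i = t" "p (Suc i) = t" | "p i = t" "u \<le> p (Suc i)" | "u \<le> p i"
      using alt[of i] alt[of "Suc i"] i by force
    then show ?thesis
    proof cases
      case 1 then show ?thesis using ut by (simp add: q_def \<psi>_def)
    next
      case 2
      then have "q (Suc i) = p (Suc i)" "q i = u" "\<psi> (Suc i) = dist (g u) (g t)" "\<psi> i = 0"
        using ut by (auto simp: q_def \<psi>_def)
      then show ?thesis using 2 dist_triangle[of "g (p (Suc i))" "g t" "g u"] by simp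
    next
      case 3
      then have "q (Suc i) = p (Suc i)" "q i = p i" "\<psi> (Suc i) = \<psi> i"
        using le by (auto simp: q_def \<psi>_def)
      then show ?thesis by simp
    qed
  qed
  have "x \<le> (\<Sum>i<k. dist (g (q (Suc i))) (g (q i)) + (\<psi> (Suc i) - \<psi> i))"
    unfolding xk by (rule sum_mono) (use termb in auto)
  also have "\<dots> = x' + (\<psi> k - \<psi> 0)"
    unfolding sum.distrib x'_def sum_lessThan_telescope by simp
  also have "\<psi> k - \<psi> 0 = dist (g u) (g t)"
    using p ut u1 by (simp add: \<psi>_def)
  also have "dist (g u) (g t) < e/2"
    using \<eta> ut u1 t by (intro \<eta>(2)) (auto simp: dist_real_def)
  finally have "x < x' + e/2" by simp
  moreover have "x' \<le> curve_variation g u 1"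
    by (rule cv_upper[OF B _ _ _ x'mem]) (use ut t u1 in auto)
  moreover have "curve_variation g t 1 = curve_variation g t u + curve_variation g u 1"
    by (rule cv_additive[OF B]) (use ut t u1 in auto)
  ultimately have "curve_variation g t u < e" using x(2) by linarith
  then show ?thesis using ut u1 by blast
qed


lemma rectifiable_path_iff: "rectifiable_path g \<longleftrightarrow> path g \<and> bdd_above (psums g 0 1)"
  by (simp add: rectifiable_path_def psums_def)

definition arcF :: "(real \<Rightarrow> 'a::metric_space) \<Rightarrow> real \<Rightarrow> real" where
  "arcF g = (\<lambda>t. curve_variation g 0 (max 0 (min 1 t)))"

lemma arclength_integral_alt:
  "arclength_integral h g = (\<integral>\<^sup>+ t. ennreal (h (g t)) \<partial>interval_measure (arcF g))"
  by (simp add: arclength_integral_def arcF_def)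

lemma arcF_mono:
  assumes B: "bdd_above (psums g 0 1)" and "x \<le> y"
  shows "arcF g x \<le> arcF g y"
  unfolding arcF_def by (rule cv_mono[OF B]) (use assms in auto)

lemma arcF_rcont:
  assumes g: "continuous_on {0..1} g" and B: "bdd_above (psums g 0 1)"
  shows "continuous (at_right a) (arcF g)"
  unfolding continuous_within tendsto_iff
proof (intro allI impI)
  fix e :: real assume e: "0 < e"
  show "\<forall>\<^sub>F y in at_right a. dist (arcF g y) (arcF g a) < e"
    unfolding eventually_at_right_field
  proof -
    consider "a < 0" | "1 \<le> a" | "0 \<le> a" "a < 1" by linarith
    then show "\<exists>b>a. \<forall>y>a. y < b \<longrightarrow> dist (arcF g y) (arcF g a) < e"
    proof cases
      case 1
      show ?thesis
        by (rule exI[of _ 0]) (use 1 e in \<open>auto simp: arcF_def\<close>)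
    next
      case 2
      show ?thesis
        by (rule exI[of _ "a+1"]) (use 2 e in \<open>auto simp: arcF_def\<close>)
    next
      case 3
      obtain u where u: "u > a" "u \<le> 1" "curve_variation g a u < e"
        using cv_rightcont[OF g B 3 e] by blast
      show ?thesis
      proof (rule exI[of _ u], intro conjI allI impI)
        show "a < u" by fact
        fix y assume y: "a < y" "y < u"
        have Fy: "arcF g y = curve_variation g 0 y" "arcF g a = curve_variation g 0 a"
          using y u 3 by (auto simp: arcF_def)
        have "curve_variation g 0 y = curve_variation g 0 a + curve_variation g a y"
          by (rule cv_additive[OF B]) (use y u 3 in auto)
        moreover have "curve_variation g a y \<le> curve_variation g a u"
          by (rule cv_mono[OF B]) (use y u 3 in auto)
        moreover have "0 \<le> curve_variation g a y"
          by (rule cv_nonneg[OF B]) (use y u 3 in auto)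
        ultimately show "dist (arcF g y) (arcF g a) < e"
          using u Fy by (simp add: dist_real_def)
      qed
    qed
  qed
qed

lemma arc_Ioc:
  assumes "rectifiable_path g" "a \<le> b"
  shows "emeasure (interval_measure (arcF g)) {a<..b} = arcF g b - arcF g a"
proof -
  have g: "continuous_on {0..1} g" and B: "bdd_above (psums g 0 1)"
    using assms(1) unfolding rectifiable_path_iff path_def by auto
  show ?thesis
    by (rule emeasure_interval_measure_Ioc[OF assms(2)])
       (auto intro: arcF_mono[OF B] arcF_rcont[OF g B])
qed

lemma arclength_lower:
  assumes g: "rectifiable_path g" and s: "0 \<le> \<sigma>" "\<sigma> \<le> 1" and m: "0 \<le> m"
    and h: "\<And>\<tau>. \<tau> \<in> {0<..\<sigma>} \<Longrightarrow> m \<le> h (g \<tau>)"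
  shows "ennreal (m * dist (g \<sigma>) (g 0)) \<le> arclength_integral h g"
proof -
  have B: "bdd_above (psums g 0 1)" using g unfolding rectifiable_path_iff by auto
  let ?M = "interval_measure (arcF g)"
  have "ennreal (m * dist (g \<sigma>) (g 0)) = ennreal m * ennreal (dist (g \<sigma>) (g 0))"
    using m by (rule ennreal_mult')
  also have "\<dots> \<le> ennreal m * ennreal (curve_variation g 0 \<sigma>)"
    by (intro mult_left_mono ennreal_leI cv_chord[OF B]) (use s in auto)
  also have "ennreal (curve_variation g 0 \<sigma>) = emeasure ?M {0<..\<sigma>}"
    using arc_Ioc[OF g s(1)] s by (simp add: arcF_def cv_same)
  also have "ennreal m * emeasure ?M {0<..\<sigma>} = (\<integral>\<^sup>+ t. ennreal m * indicator {0<..\<sigma>} t \<partial>?M)"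
    by (rule nn_integral_cmult_indicator[symmetric]) simp
  also have "\<dots> \<le> (\<integral>\<^sup>+ t. ennreal (h (g t)) \<partial>?M)"
    by (rule nn_integral_mono) (auto simp: indicator_def intro!: ennreal_leI h)
  finally show ?thesis unfolding arclength_integral_alt .
qed

lemma arclength_upper:
  assumes g: "rectifiable_path g" and M: "0 \<le> M"
    and h: "\<And>\<tau>. \<tau> \<in> {0<..1} \<Longrightarrow> h (g \<tau>) \<le> M"
  shows "arclength_integral h g \<le> ennreal (M * curve_variation g 0 1)"
proof -
  let ?M = "interval_measure (arcF g)"
  have n1: "emeasure ?M (\<Union>n. {-real n<..0}) = 0"
  proof (rule emeasure_UN_eq_0)
    fix n :: nat show "emeasure ?M {-real n<..0} = 0"
      using arc_Ioc[OF g, of "-real n" 0] by (simp add: arcF_def)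
  qed auto
  have n2: "emeasure ?M (\<Union>n. {1<..1+real n}) = 0"
  proof (rule emeasure_UN_eq_0)
    fix n :: nat show "emeasure ?M {1<..1+real n} = 0"
      using arc_Ioc[OF g, of 1 "1+real n"] by (simp add: arcF_def)
  qed auto
  have e1: "(\<Union>n. {-real n<..0}) = {..0::real}"
  proof safe
    fix x :: real assume "x \<le> 0"
    obtain n :: nat where "-x < real n" using reals_Archimedean2 by blast
    then have "x \<in> {-real n<..0}" using \<open>x \<le> 0\<close> by auto
    then show "x \<in> (\<Union>n. {-real n<..0})" by blast
  qed auto
  have e2: "(\<Union>n. {1<..1+real n}) = {1::real<..}"
  proof safe
    fix x :: real assume "1 < x"
    obtain n :: nat where "x - 1 < real n" using reals_Archimedean2 by blast
    then have "x \<in> {1<..1+real n}" using \<open>1 < x\<close> by auto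
    then show "x \<in> (\<Union>n. {1<..1+real n})" by blast
  qed auto
  have N: "{..0} \<union> {1<..} \<in> null_sets ?M"
    using n1 n2 unfolding e1 e2 by (intro null_sets.Un null_setsI) auto
  have ae: "AE t in ?M. ennreal (h (g t)) \<le> ennreal M * indicator {0<..1} t"
    by (rule AE_I'[OF N]) (auto simp: indicator_def intro!: ennreal_leI h)
  have "arclength_integral h g \<le> (\<integral>\<^sup>+ t. ennreal M * indicator {0<..1} t \<partial>?M)"
    unfolding arclength_integral_alt by (rule nn_integral_mono_AE[OF ae])
  also have "\<dots> = ennreal M * emeasure ?M {0<..1}"
    by (rule nn_integral_cmult_indicator) simp
  also have "emeasure ?M {0<..1} = ennreal (curve_variation g 0 1)"
    using arc_Ioc[OF g, of 0 1] by (simp add: arcF_def cv_same)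
  finally show ?thesis using M by (simp add: ennreal_mult')
qed


lemma lipschitz_rectifiable:
  assumes "path g"
    and L: "\<And>u v. u \<in> {0..1} \<Longrightarrow> v \<in> {0..1} \<Longrightarrow> u \<le> v \<Longrightarrow> dist (g v) (g u) \<le> L * (v - u)"
  shows "rectifiable_path g"
  unfolding rectifiable_path_iff
proof (intro conjI assms bdd_aboveI)
  fix x assume "x \<in> psums g 0 1"
  then obtain k p where xk: "x = (\<Sum>i<k. dist (g (p (Suc i))) (g (p i)))"
    and p: "p 0 = 0" "p k = 1" "\<forall>i<k. p i \<le> p (Suc i)"
    unfolding psums_def by blast
  have p01: "p i \<in> {0..1}" if "i \<le> k" for i
    using chain_mono[OF p(3), of 0 i] chain_mono[OF p(3), of i k] that p by auto
  have "x \<le> (\<Sum>i<k. L * (p (Suc i) - p i))"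
    unfolding xk by (rule sum_mono) (use p01 p(3) in \<open>auto intro!: L\<close>)
  also have "\<dots> = L * (p k - p 0)"
    by (simp add: sum_distrib_left[symmetric] sum_lessThan_telescope)
  finally show "x \<le> L" using p by simp
qed

lemma poly_rectifiable:
  fixes g :: "real \<Rightarrow> 'a::euclidean_space"
  assumes "polynomial_function g"
  shows "rectifiable_path g"
proof -
  have cont: "continuous_on UNIV g"
    using assms continuous_on_polymonial_function by blast
  then have pg: "path g" unfolding path_def using continuous_on_subset by blast
  obtain p' where p': "polynomial_function p'" "\<And>x. (g has_vector_derivative (p' x)) (at x)"
    using has_vector_derivative_polynomial_function[OF assms] by blast
  have "compact (p' ` {0..1})"
    by (intro compact_continuous_image continuous_on_polymonial_function p') simp
  then obtain B where B: "B > 0" "\<And>x. x \<in> p' ` {0..1} \<Longrightarrow> norm x \<le> B"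
    using compact_imp_bounded bounded_pos by metis
  show ?thesis
  proof (rule lipschitz_rectifiable[OF pg])
    fix u v :: real assume uv: "u \<in> {0..1}" "v \<in> {0..1}" "u \<le> v"
    show "dist (g v) (g u) \<le> B * (v - u)"
    proof (cases "u = v")
      case False
      then have "u < v" using uv by simp
      have "norm (g v - g u) \<le> B * v - B * u"
      proof (rule differentiable_bound_general[OF \<open>u < v\<close>, where f' = p' and \<phi>' = "\<lambda>_. B"])
        show "continuous_on {u..v} g" using cont continuous_on_subset by blast
        show "continuous_on {u..v} (\<lambda>x. B * x)" by (intro continuous_intros)
        show "(g has_vector_derivative p' x) (at x)" for x by (rule p'(2))
        show "((\<lambda>x. B * x) has_vector_derivative B) (at x)" for x
          using has_vector_derivative_mult_right[OF has_vector_derivative_id, of B "at x"] by simp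
        show "norm (p' x) \<le> B" if "u < x" "x < v" for x
          using B(2)[of "p' x"] uv that by auto
      qed
      then show ?thesis by (simp add: dist_norm algebra_simps)
    qed simp
  qed
qed

lemma exists_good_path:
  fixes \<Omega> :: "'a::euclidean_space set"
  assumes "open \<Omega>" "connected \<Omega>" "x \<in> \<Omega>" "y \<in> \<Omega>"
  shows "\<exists>g. rectifiable_path g \<and> path_image g \<subseteq> \<Omega> \<and> pathstart g = x \<and> pathfinish g = y"
  using connected_open_polynomial_connected[OF assms] poly_rectifiable by blast


typedef 'a ext = "UNIV :: 'a option set" morphisms rep_ext abs_ext by simp

lemma range_abs_ext: "range abs_ext = UNIV"
  by (rule surjI[of _ rep_ext]) (rule rep_ext_inverse)

lemma bij_abs_ext: "bij_betw abs_ext UNIV UNIV"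
  by (simp add: bij_betw_def inj_on_def abs_ext_inject range_abs_ext)

instance ext :: (finite) finite
proof
  have "(UNIV :: 'a ext set) = abs_ext ` UNIV" by (simp add: range_abs_ext)
  then show "finite (UNIV :: 'a ext set)" by (metis finite finite_imageI)
qed

definition enc_ext :: "'a::finite ext \<Rightarrow> nat" where
  "enc_ext = (SOME h. inj h)"

lemma inj_enc_ext: "inj (enc_ext :: 'a::finite ext \<Rightarrow> nat)"
proof -
  obtain h :: "'a ext \<Rightarrow> nat" and n where "h ` UNIV = {i. i < n}" "inj_on h UNIV"
    using finite_imp_inj_to_nat_seg[OF finite] by blast
  then have "\<exists>h :: 'a ext \<Rightarrow> nat. inj h" by blast
  then show ?thesis unfolding enc_ext_def by (rule someI_ex)
qed

instantiation ext :: (finite) wellorder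
begin
definition less_eq_ext :: "'a ext \<Rightarrow> 'a ext \<Rightarrow> bool" where "less_eq_ext x y \<longleftrightarrow> enc_ext x \<le> enc_ext y"
definition less_ext :: "'a ext \<Rightarrow> 'a ext \<Rightarrow> bool" where "less_ext x y \<longleftrightarrow> enc_ext x < enc_ext y"
instance
proof
  fix x y z :: "'a ext"
  show "(x < y) = (x \<le> y \<and> \<not> y \<le> x)" by (auto simp: less_eq_ext_def less_ext_def)
  show "x \<le> x" by (simp add: less_eq_ext_def)
  show "x \<le> y \<Longrightarrow> y \<le> z \<Longrightarrow> x \<le> z" by (simp add: less_eq_ext_def)
  show "x \<le> y \<Longrightarrow> y \<le> x \<Longrightarrow> x = y"
  proof -
    assume "x \<le> y" "y \<le> x"
    then have "enc_ext x = enc_ext y" by (simp add: less_eq_ext_def)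
    then show "x = y" by (rule injD[OF inj_enc_ext])
  qed
  show "x \<le> y \<or> y \<le> x" by (auto simp: less_eq_ext_def)
next
  fix P :: "'a ext \<Rightarrow> bool" and a
  assume H: "\<And>x. (\<And>y. y < x \<Longrightarrow> P y) \<Longrightarrow> P x"
  show "P a"
  proof (induct a rule: measure_induct_rule[of enc_ext])
    case (less x)
    show ?case by (rule H, rule less) (simp add: less_ext_def)
  qed
qed
end

lemma all_ext: "(\<forall>i::'a ext. P i) \<longleftrightarrow> P (abs_ext None) \<and> (\<forall>j. P (abs_ext (Some j)))"
proof (intro iffI allI)
  fix i :: "'a ext" assume H: "P (abs_ext None) \<and> (\<forall>j. P (abs_ext (Some j)))"
  have "i = abs_ext (rep_ext i)" by (simp add: rep_ext_inverse)
  then show "P i" using H by (cases "rep_ext i") auto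
qed auto

lemma sum_ext: "(\<Sum>i\<in>UNIV. h i) = h (abs_ext None) + (\<Sum>j\<in>UNIV. h (abs_ext (Some j)))"
  for h :: "'a::finite ext \<Rightarrow> real"
proof -
  have "(\<Sum>i\<in>UNIV. h i) = (\<Sum>z\<in>UNIV. h (abs_ext z))"
    by (rule sum.reindex_bij_betw[symmetric]) (rule bij_abs_ext)
  also have "\<dots> = h (abs_ext None) + (\<Sum>j\<in>UNIV. h (abs_ext (Some j)))"
    by (simp add: UNIV_option_conv sum.reindex)
  finally show ?thesis .
qed

lemma prod_ext: "(\<Prod>i\<in>UNIV. h i) = h (abs_ext None) * (\<Prod>j\<in>UNIV. h (abs_ext (Some j)))"
  for h :: "'a::finite ext \<Rightarrow> real"
proof -
  have "(\<Prod>i\<in>UNIV. h i) = (\<Prod>z\<in>UNIV. h (abs_ext z))"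
    by (rule prod.reindex_bij_betw[symmetric]) (rule bij_abs_ext)
  also have "\<dots> = h (abs_ext None) * (\<Prod>j\<in>UNIV. h (abs_ext (Some j)))"
    by (simp add: UNIV_option_conv prod.reindex)
  finally show ?thesis .
qed

definition phi :: "real \<times> (real^'m) \<Rightarrow> real^('m::finite ext)" where
  "phi x = (\<chi> i. case rep_ext i of None \<Rightarrow> fst x | Some j \<Rightarrow> snd x $ j)"

definition psi :: "real^('m::finite ext) \<Rightarrow> real \<times> (real^'m)" where
  "psi v = (v $ abs_ext None, \<chi> j. v $ abs_ext (Some j))"

lemma phi_None[simp]: "phi x $ abs_ext None = fst x"
  by (simp add: phi_def abs_ext_inverse)
lemma phi_Some[simp]: "phi x $ abs_ext (Some j) = snd x $ j"
  by (simp add: phi_def abs_ext_inverse)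

lemma psi_phi[simp]: "psi (phi x) = x"
  by (simp add: psi_def)

lemma phi_psi[simp]: "phi (psi v) = v"
  by (simp add: vec_eq_iff all_ext[of "\<lambda>i. phi (psi v) $ i = v $ i"]) (simp add: psi_def)

lemma linear_phi: "linear phi"
proof (rule linearI)
  fix x y :: "real \<times> (real^'m)" and c :: real
  show "phi (x + y) = phi x + phi y" unfolding vec_eq_iff by (subst all_ext) simp
  show "phi (c *\<^sub>R x) = c *\<^sub>R phi x" unfolding vec_eq_iff by (subst all_ext) simp
qed

lemma linear_psi: "linear psi"
  by (rule linearI) (simp_all add: psi_def vec_eq_iff)

lemma inner_phi: "inner (phi x) (phi y) = inner x y"
  by (simp add: inner_vec_def sum_ext inner_prod_def)

lemma norm_phi: "norm (phi x) = norm x"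
  by (simp add: norm_eq_sqrt_inner inner_phi)

lemma norm_psi: "norm (psi v) = norm v"
  using norm_phi[of "psi v"] by simp

lemma dist_phi: "dist (phi x) (phi y) = dist x y"
proof -
  have "phi x - phi y = phi (x - y)" by (rule linear_diff[OF linear_phi, symmetric])
  then show ?thesis by (simp add: dist_norm norm_phi)
qed

lemma dist_psi: "dist (psi x) (psi y) = dist x y"
  using dist_phi[of "psi x" "psi y"] by simp

lemma cont_phi: "continuous_on UNIV phi"
  using linear_phi linear_conv_bounded_linear linear_continuous_on by blast

lemma cont_psi: "continuous_on UNIV psi"
  using linear_psi linear_conv_bounded_linear linear_continuous_on by blast

lemma meas_phi: "phi \<in> borel_measurable (lborel :: (real \<times> (real^'m)) measure)"
  using borel_measurable_continuous_onI[OF cont_phi] by (simp add: measurable_lborel1)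

lemma meas_psi: "psi \<in> borel_measurable (lborel :: (real^('m::finite ext)) measure)"
  using borel_measurable_continuous_onI[OF cont_psi] by (simp add: measurable_lborel1)

lemma emeasure_box_cart:
  fixes l u :: "real^'n"
  assumes "\<And>i. l $ i \<le> u $ i"
  shows "emeasure lborel (box l u) = ennreal (\<Prod>i\<in>UNIV. u $ i - l $ i)"
proof -
  have "emeasure lborel (box l u) = ennreal (\<Prod>b\<in>Basis. (u - l) \<bullet> b)"
    by (rule emeasure_lborel_box) (use assms in \<open>auto simp: Basis_vec_def cart_eq_inner_axis[symmetric]\<close>)
  also have "(\<Prod>b\<in>Basis. (u - l) \<bullet> b) = (\<Prod>i\<in>UNIV. u $ i - l $ i)"
    by (simp add: Basis_vec_def cart_eq_inner_axis axis_eq_axis prod.UNION_disjoint inner_diff_left)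
  finally show ?thesis .
qed

lemma phi_vimage_box:
  fixes l u :: "real^('m::finite ext)"
  shows "phi -` box l u = {l $ abs_ext None <..< u $ abs_ext None} \<times>
           box (\<chi> j. l $ abs_ext (Some j)) (\<chi> j::'m. u $ abs_ext (Some j))"
proof (rule set_eqI)
  fix x :: "real \<times> (real^'m)"
  show "x \<in> phi -` box l u \<longleftrightarrow> x \<in> {l $ abs_ext None <..< u $ abs_ext None} \<times>
           box (\<chi> j. l $ abs_ext (Some j)) (\<chi> j::'m. u $ abs_ext (Some j))"
    unfolding vimage_eq mem_box_cart mem_Times_iff
    by (subst all_ext) (cases x, simp)
qed

lemma distr_phi: "distr lborel borel phi = (lborel :: (real^('m::finite ext)) measure)"
proof (rule lborel_eqI[symmetric])
  show "sets (distr lborel borel phi) = sets (borel :: (real^('m::finite ext)) measure)" by simp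
  fix l u :: "real^('m::finite ext)"
  assume lu: "\<And>b. b \<in> Basis \<Longrightarrow> l \<bullet> b \<le> u \<bullet> b"
  have lu': "l $ i \<le> u $ i" for i
    using lu[of "axis i 1"] by (auto simp: Basis_vec_def cart_eq_inner_axis[symmetric])
  let ?X = "{l $ abs_ext None <..< u $ abs_ext None}"
  let ?Y = "box (\<chi> j. l $ abs_ext (Some j)) (\<chi> j::'m. u $ abs_ext (Some j))"
  have "emeasure (distr lborel borel phi) (box l u) = emeasure lborel (phi -` box l u \<inter> space lborel)"
    by (rule emeasure_distr[OF meas_phi]) simp
  also have "\<dots> = emeasure (lborel \<Otimes>\<^sub>M lborel) (?X \<times> ?Y)"
    by (simp add: phi_vimage_box lborel_prod)
  also have "\<dots> = emeasure lborel ?X * emeasure lborel ?Y"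
    by (rule lborel.emeasure_pair_measure_Times) auto
  also have "\<dots> = ennreal (u $ abs_ext None - l $ abs_ext None) *
                   ennreal (\<Prod>j\<in>UNIV. u $ abs_ext (Some j) - l $ abs_ext (Some j))"
    using lu' by (simp add: emeasure_box_cart)
  also have "\<dots> = ennreal (\<Prod>i\<in>UNIV. u $ i - l $ i)"
    using lu' by (simp add: prod_ext[of "\<lambda>i. u $ i - l $ i"] ennreal_mult prod_nonneg)
  also have "(\<Prod>i\<in>UNIV. u $ i - l $ i) = (\<Prod>b\<in>Basis. (u - l) \<bullet> b)"
    by (simp add: Basis_vec_def cart_eq_inner_axis axis_eq_axis prod.UNION_disjoint inner_diff_left)
  finally show "emeasure (distr lborel borel phi) (box l u) = (\<Prod>b\<in>Basis. (u - l) \<bullet> b)" .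
qed

lemma emeasure_phi_image:
  fixes S :: "(real \<times> (real^'m)) set"
  assumes "S \<in> sets borel"
  shows "emeasure lborel (phi ` S) = emeasure lborel S"
proof -
  have img: "phi ` S = psi -` S"
    by (auto simp: image_iff) (metis phi_psi)
  have Sb: "phi ` S \<in> sets borel"
    unfolding img using measurable_sets[OF borel_measurable_continuous_onI[OF cont_psi] assms] by simp
  have "emeasure (lborel :: (real^('m::finite ext)) measure) (phi ` S) = emeasure (distr lborel borel phi) (phi ` S)"
    by (simp add: distr_phi)
  also have "\<dots> = emeasure lborel (phi -` (phi ` S) \<inter> space lborel)"
    by (rule emeasure_distr[OF meas_phi Sb])
  also have "phi -` (phi ` S) = S"
    by (auto simp: image_iff) (metis psi_phi)
  finally show ?thesis by simp
qed


lemma rigid_inj: "rigid f \<Longrightarrow> inj f"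
  unfolding rigid_def inj_def by (metis dist_eq_0_iff)

lemma rigid_cont: "rigid f \<Longrightarrow> continuous_on S f"
  unfolding rigid_def continuous_on_iff by (metis)

lemma rigid_orth:
  fixes f :: "'a::real_inner \<Rightarrow> 'a"
  assumes "rigid f"
  shows "orthogonal_transformation (\<lambda>x. f x - f 0)"
  unfolding orthogonal_transformation_isometry
  using assms unfolding rigid_def by (simp add: dist_norm)

lemma borel_phi_image:
  fixes S :: "(real \<times> (real^'m::finite)) set"
  assumes "S \<in> sets borel"
  shows "phi ` S \<in> sets borel"
proof -
  have img: "phi ` S = psi -` S"
    by (auto simp: image_iff) (metis phi_psi)
  show ?thesis
    unfolding img using measurable_sets[OF borel_measurable_continuous_onI[OF cont_psi] assms] by simp
qed

lemma emeasure_lborel_measure: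
  fixes X :: "'a::euclidean_space set"
  assumes "X \<in> sets borel" "bounded X"
  shows "emeasure lborel X = ennreal (measure lebesgue X)"
proof -
  have "emeasure lborel X \<noteq> top" using emeasure_bounded_finite[OF assms(2)] by simp
  then have "emeasure lborel X = ennreal (measure lborel X)" by (rule emeasure_eq_ennreal_measure)
  also have "measure lborel X = measure lebesgue X" using assms(1) by simp
  finally show ?thesis .
qed

lemma rigid_measure:
  fixes f :: "real \<times> (real^'m::finite) \<Rightarrow> real \<times> (real^'m)"
  assumes f: "rigid f" and S: "S \<in> sets borel" "bounded S"
  shows "f ` S \<in> sets borel" "emeasure lborel (f ` S) = emeasure lborel S"
proof -
  define L where "L x = f x - f 0" for x
  have L: "orthogonal_transformation L" unfolding L_def by (rule rigid_orth[OF f])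
  have fL: "f x = f 0 + L x" for x by (simp add: L_def)
  have bijL: "bij L" using orthogonal_transformation_bij[OF L] .
  have Linv: "orthogonal_transformation (inv L)" by (rule orthogonal_transformation_inv[OF L])
  have contLinv: "continuous_on UNIV (inv L)"
    using orthogonal_transformation_linear[OF Linv] linear_conv_bounded_linear linear_continuous_on by blast
  define g where "g y = inv L (y - f 0)" for y
  have cd: "continuous_on UNIV (\<lambda>y. y - f 0)" by (intro continuous_intros)
  have contg: "continuous_on UNIV g" unfolding g_def
    by (rule continuous_on_compose2[OF contLinv cd]) simp
  have injL: "inj L" using bij_is_inj[OF bijL] .
  have surjL: "surj L" using bij_is_surj[OF bijL] .
  have gf: "g (f x) = x" for x
    by (simp add: g_def L_def[symmetric] inv_f_f[OF injL])
  have fg: "f (g z) = z" for z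
  proof -
    have "f (g z) = f 0 + L (g z)" by (rule fL)
    also have "L (g z) = z - f 0" unfolding g_def by (rule surj_f_inv_f[OF surjL])
    finally show ?thesis by simp
  qed
  have fS: "f ` S = g -` S"
  proof (rule set_eqI)
    fix z
    show "z \<in> f ` S \<longleftrightarrow> z \<in> g -` S"
    proof
      assume "z \<in> f ` S" then show "z \<in> g -` S" using gf by auto
    next
      assume "z \<in> g -` S" then have "f (g z) \<in> f ` S" by simp
      then show "z \<in> f ` S" by (simp add: fg)
    qed
  qed
  show fSb: "f ` S \<in> sets borel"
    unfolding fS using measurable_sets[OF borel_measurable_continuous_onI[OF contg] S(1)] by simp
  have bL: "bounded_linear L"
    using orthogonal_transformation_linear[OF L] linear_conv_bounded_linear by blast
  have fSbd: "bounded (f ` S)"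
  proof -
    have "f ` S = (+) (f 0) ` (L ` S)" by (auto simp: L_def image_iff)
    then show ?thesis using bounded_translation[OF bounded_linear_image[OF S(2) bL]] by simp
  qed
  have bphi: "bounded_linear phi" using linear_phi linear_conv_bounded_linear by blast
  define L' where "L' v = phi (L (psi v))" for v
  have L': "orthogonal_transformation L'"
    unfolding orthogonal_transformation_isometry
  proof (intro conjI allI)
    have p0: "psi (0::real^('m ext)) = 0" by (simp add: psi_def vec_eq_iff zero_prod_def)
    have f0: "phi (0::real\<times>(real^'m)) = 0" by (rule linear_0[OF linear_phi])
    show "L' 0 = 0" by (simp add: L'_def p0 L_def f0)
    fix x y
    show "dist (L' x) (L' y) = dist x y"
      unfolding L'_def dist_phi orthogonal_transformation_isometry[THEN iffD1, OF L, THEN conjunct2, rule_format] dist_psi ..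
  qed
  have img: "phi ` (f ` S) = (+) (phi (f 0)) ` (L' ` (phi ` S))"
  proof -
    have eq: "phi (f x) = phi (f 0) + L' (phi x)" for x
    proof -
      have "phi (f x) = phi (f 0 + L x)" using fL[of x] by simp
      then show ?thesis unfolding L'_def using linear_add[OF linear_phi] by simp
    qed
    have "phi ` (f ` S) = (\<lambda>x. phi (f 0) + L' (phi x)) ` S"
      unfolding image_image by (intro image_cong refl eq)
    also have "\<dots> = (+) (phi (f 0)) ` (L' ` (phi ` S))" by (simp add: image_image)
    finally show ?thesis .
  qed
  have phiS_lm: "phi ` S \<in> lmeasurable"
    by (rule bounded_set_imp_lmeasurable) (use bounded_linear_image[OF S(2) bphi] borel_phi_image[OF S(1)] in auto)
  have "emeasure lborel (f ` S) = emeasure lborel (phi ` (f ` S))"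
    by (rule emeasure_phi_image[OF fSb, symmetric])
  also have "\<dots> = ennreal (measure lebesgue (phi ` (f ` S)))"
    by (rule emeasure_lborel_measure) (use borel_phi_image[OF fSb] bounded_linear_image[OF fSbd bphi] in auto)
  also have "measure lebesgue (phi ` (f ` S)) = measure lebesgue (phi ` S)"
    unfolding img measure_translation by (rule measure_orthogonal_image[OF L' phiS_lm])
  also have "ennreal (measure lebesgue (phi ` S)) = emeasure lborel (phi ` S)"
    by (rule emeasure_lborel_measure[symmetric]) (use borel_phi_image[OF S(1)] bounded_linear_image[OF S(2) bphi] in auto)
  also have "\<dots> = emeasure lborel S" by (rule emeasure_phi_image[OF S(1)])
  finally show "emeasure lborel (f ` S) = emeasure lborel S" .
qed


lemma ess_basic:
  fixes f :: "real \<times> (real^'m::finite) \<Rightarrow> real \<times> (real^'m)"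
  assumes "essential_tube \<Omega> f l r c \<Omega>T"
  shows "0 < l" "0 < r" "0 < c" "rigid f" "\<Omega>T \<in> components (tube f l r \<inter> \<Omega>)"
    "\<Omega>T \<inter> tube_wall f l r = {}"
    "\<And>t. t \<in> {0..l} \<Longrightarrow> measure lebesgue (tube_slice f r \<Omega>T t) \<ge> c * measure lebesgue (cball (0::real^'m) r)"
  using assms unfolding essential_tube_def by auto

lemma tube_compact:
  assumes "rigid f"
  shows "compact (tube f l r)"
  unfolding tube_def
  by (intro compact_continuous_image rigid_cont[OF assms] compact_Times compact_Icc compact_cball)

lemma ess_sub:
  assumes "essential_tube \<Omega> f l r c \<Omega>T"
  shows "\<Omega>T \<subseteq> tube f l r" "\<Omega>T \<subseteq> \<Omega>"
  using in_components_subset[OF ess_basic(5)[OF assms]] by auto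

lemma ess_maximal:
  assumes "essential_tube \<Omega> f l r c \<Omega>T" "connected Q" "Q \<subseteq> tube f l r" "Q \<subseteq> \<Omega>" "Q \<inter> \<Omega>T \<noteq> {}"
  shows "Q \<subseteq> \<Omega>T"
  using components_maximal[OF ess_basic(5)[OF assms(1)] assms(2)] assms(3-5) by blast

lemma ess_borel:
  assumes "essential_tube \<Omega> f l r c \<Omega>T" "open \<Omega>"
  shows "\<Omega>T \<in> sets borel"
proof -
  obtain F where F: "closed F" "\<Omega>T = (tube f l r \<inter> \<Omega>) \<inter> F"
    using closedin_component[OF ess_basic(5)[OF assms(1)]] unfolding closedin_closed by blast
  have "closed (tube f l r)" using tube_compact[OF ess_basic(4)[OF assms(1)]] compact_imp_closed by blast
  then show ?thesis unfolding F(2) using F(1) assms(2) by (intro sets.Int borel_closed borel_open) auto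
qed

lemma ess_wall_dist:
  fixes f :: "real \<times> (real^'m::finite) \<Rightarrow> real \<times> (real^'m)"
  assumes ess: "essential_tube \<Omega> f l r c \<Omega>T" and op: "open \<Omega>" and z: "\<zeta> \<in> \<Omega>T"
  shows "frontier \<Omega> \<noteq> {}" "0 < infdist \<zeta> (frontier \<Omega>)" "infdist \<zeta> (frontier \<Omega>) \<le> 2 * r"
proof -
  note B = ess_basic[OF ess]
  have "\<zeta> \<in> tube f l r" using ess_sub[OF ess] z by auto
  then obtain t y where ty: "\<zeta> = f (t, y)" "t \<in> {0..l}" "norm y \<le> r"
    unfolding tube_def by auto
  obtain i :: 'm where True by simp
  define y' where "y' = r *\<^sub>R axis i (1::real)"
  have ny': "norm y' = r" using B(2) by (simp add: y'_def)
  define Q where "Q = (\<lambda>v. f (t, v)) ` closed_segment y y'"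
  have segsub: "closed_segment y y' \<subseteq> cball 0 r"
    by (rule closed_segment_subset) (use ty ny' in auto)
  have cQ: "connected Q" unfolding Q_def
    by (intro connected_continuous_image connected_segment continuous_on_compose2[OF rigid_cont[OF B(4)]] continuous_intros) auto
  have Qsub: "Q \<subseteq> tube f l r" unfolding Q_def tube_def using segsub ty by auto
  have zQ: "\<zeta> \<in> Q" unfolding Q_def ty by auto
  have wQ: "f (t, y') \<in> Q" unfolding Q_def by auto
  have wall: "f (t, y') \<in> tube_wall f l r" unfolding tube_wall_def using ty ny' by auto
  have "\<not> Q \<subseteq> \<Omega>"
  proof
    assume "Q \<subseteq> \<Omega>"
    then have "Q \<subseteq> \<Omega>T" using ess_maximal[OF ess cQ Qsub] zQ z by blast
    then show False using wQ wall B(6) by blast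
  qed
  moreover have "Q \<inter> \<Omega> \<noteq> {}" using zQ z ess_sub[OF ess] by blast
  ultimately have "Q \<inter> frontier \<Omega> \<noteq> {}" using connected_Int_frontier[OF cQ] by blast
  then obtain v where v: "v \<in> closed_segment y y'" "f (t, v) \<in> frontier \<Omega>" unfolding Q_def by blast
  show fne: "frontier \<Omega> \<noteq> {}" using v by blast
  have "infdist \<zeta> (frontier \<Omega>) \<le> dist \<zeta> (f (t, v))" by (rule infdist_le[OF v(2)])
  also have "\<dots> = dist y v" unfolding ty using B(4) by (simp add: rigid_def dist_Pair_Pair)
  also have "\<dots> \<le> dist y y'" using dist_in_closed_segment[OF v(1)] by (simp add: dist_commute)
  also have "\<dots> \<le> norm y + norm y'" by (simp add: dist_norm norm_triangle_ineq4)
  also have "\<dots> \<le> 2 * r" using ty ny' by simp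
  finally show "infdist \<zeta> (frontier \<Omega>) \<le> 2 * r" .
  have "\<zeta> \<notin> frontier \<Omega>" using z ess_sub[OF ess] op by (auto simp: frontier_def interior_open)
  then have "infdist \<zeta> (frontier \<Omega>) \<noteq> 0" using in_closed_iff_infdist_zero[OF frontier_closed fne] by blast
  then show "0 < infdist \<zeta> (frontier \<Omega>)" using infdist_nonneg by (metis less_eq_real_def)
qed

lemma ess_exit:
  fixes f :: "real \<times> (real^'m::finite) \<Rightarrow> real \<times> (real^'m)"
  assumes ess: "essential_tube \<Omega> f l r c \<Omega>T"
    and g: "path g" "path_image g \<subseteq> \<Omega>" "g 0 \<in> \<Omega>T" "g 1 \<notin> \<Omega>T"
  shows "\<exists>\<sigma>\<in>{0..1}. (\<forall>\<tau>\<in>{0..\<sigma>}. g \<tau> \<in> \<Omega>T) \<and> (\<exists>a y. (a = 0 \<or> a = l) \<and> g \<sigma> = f (a, y))"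
proof -
  note B = ess_basic[OF ess]
  let ?T = "tube f l r"
  have Tcl: "closed ?T" using tube_compact[OF B(4)] compact_imp_closed by blast
  have gc: "continuous_on {0..1} g" using g(1) unfolding path_def .
  have gO: "g \<tau> \<in> \<Omega>" if "\<tau> \<in> {0..1}" for \<tau> using g(2) that unfolding path_image_def by blast
  define S where "S = {\<tau>\<in>{0..1}. g \<tau> \<notin> \<Omega>T}"
  have S1: "1 \<in> S" using g(4) by (simp add: S_def)
  have Sne: "S \<noteq> {}" using S1 by blast
  have Sbdd: "bdd_below S" unfolding S_def by (rule bdd_belowI[of _ 0]) auto
  define \<sigma> where "\<sigma> = Inf S"
  have s0: "0 \<le> \<sigma>" unfolding \<sigma>_def by (rule cInf_greatest[OF Sne]) (auto simp: S_def)
  have s1: "\<sigma> \<le> 1" unfolding \<sigma>_def by (rule cInf_lower[OF S1 Sbdd])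
  have before: "g \<tau> \<in> \<Omega>T" if "0 \<le> \<tau>" "\<tau> < \<sigma>" for \<tau>
  proof (rule ccontr)
    assume "g \<tau> \<notin> \<Omega>T"
    then have "\<tau> \<in> S" using that s1 by (simp add: S_def)
    then have "\<sigma> \<le> \<tau>" unfolding \<sigma>_def by (rule cInf_lower[OF _ Sbdd])
    then show False using that by simp
  qed
  have imgT: "g ` {0..\<sigma>} \<subseteq> ?T"
  proof (cases "\<sigma> = 0")
    case True then show ?thesis using g(3) ess_sub[OF ess] by auto
  next
    case False
    then have "0 < \<sigma>" using s0 by simp
    have "g ` closure {0..<\<sigma>} \<subseteq> ?T"
    proof (rule image_closure_subset[OF _ Tcl])
      show "continuous_on (closure {0..<\<sigma>}) g"
        using \<open>0 < \<sigma>\<close> s1 by (auto intro: continuous_on_subset[OF gc])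
      show "g ` {0..<\<sigma>} \<subseteq> ?T" using before ess_sub[OF ess] by auto
    qed
    then show ?thesis using \<open>0 < \<sigma>\<close> by simp
  qed
  have connI: "connected (g ` {a..b})" if "0 \<le> a" "b \<le> 1" for a b
    by (intro connected_continuous_image continuous_on_subset[OF gc]) (use that in auto)
  have upto: "g ` {0..\<sigma>} \<subseteq> \<Omega>T"
  proof (rule ess_maximal[OF ess connI imgT])
    have "g 0 \<in> g ` {0..\<sigma>}" using s0 by auto
    then show "g ` {0..\<sigma>} \<inter> \<Omega>T \<noteq> {}" using g(3) by blast
  qed (use gO s0 s1 in auto)
  have gs: "g \<sigma> \<in> \<Omega>T" using upto s0 by auto
  have "\<sigma> \<noteq> 1" using gs g(4) by auto
  then have s1': "\<sigma> < 1" using s1 by simp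
  have "g \<sigma> \<in> ?T" using gs ess_sub[OF ess] by auto
  then obtain a y where ay: "g \<sigma> = f (a, y)" "a \<in> {0..l}" "norm y \<le> r" unfolding tube_def by auto
  have "norm y \<noteq> r"
  proof
    assume "norm y = r"
    then have "g \<sigma> \<in> tube_wall f l r" unfolding tube_wall_def ay using ay by auto
    then show False using gs B(6) by blast
  qed
  then have ny: "norm y < r" using ay by simp
  have "a = 0 \<or> a = l"
  proof (rule ccontr)
    assume "\<not> (a = 0 \<or> a = l)"
    then have a: "0 < a" "a < l" using ay by auto
    define U where "U = {0<..<l} \<times> ball (0::real^'m) r"
    have oU: "open U" unfolding U_def by (intro open_Times) auto
    have ofU: "open (f ` U)"
      by (rule invariance_of_domain[OF rigid_cont[OF B(4)] oU]) (use rigid_inj[OF B(4)] in \<open>auto simp: inj_on_def inj_def\<close>)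
    have fUT: "f ` U \<subseteq> ?T" unfolding U_def tube_def by (auto intro!: imageI)
    have gsU: "g \<sigma> \<in> f ` U" unfolding ay U_def using a ny by auto
    obtain \<delta> where \<delta>: "\<delta> > 0" "ball (g \<sigma>) \<delta> \<subseteq> f ` U"
      using ofU gsU open_contains_ball by blast
    obtain \<epsilon> where \<epsilon>: "\<epsilon> > 0" "\<And>\<tau>. \<tau> \<in> {0..1} \<Longrightarrow> dist \<tau> \<sigma> < \<epsilon> \<Longrightarrow> dist (g \<tau>) (g \<sigma>) < \<delta>"
      using gc \<delta>(1) s0 s1 unfolding continuous_on_iff by (metis atLeastAtMost_iff)
    have "Inf S < \<sigma> + \<epsilon>" using \<epsilon>(1) by (simp add: \<sigma>_def)
    then obtain \<tau> where \<tau>: "\<tau> \<in> S" "\<tau> < \<sigma> + \<epsilon>" using cInf_lessD[OF Sne] by blast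
    have st: "\<sigma> \<le> \<tau>" unfolding \<sigma>_def by (rule cInf_lower[OF \<tau>(1) Sbdd])
    have t1: "\<tau> \<le> 1" "0 \<le> \<tau>" using \<tau>(1) by (auto simp: S_def)
    have seg: "g ` {\<sigma>..\<tau>} \<subseteq> f ` U"
    proof
      fix w assume "w \<in> g ` {\<sigma>..\<tau>}"
      then obtain x where x: "x \<in> {\<sigma>..\<tau>}" "w = g x" by blast
      have "dist (g x) (g \<sigma>) < \<delta>" using x t1 s0 \<tau>(2) by (intro \<epsilon>(2)) (auto simp: dist_real_def)
      then show "w \<in> f ` U" using \<delta>(2) x by (auto simp: dist_commute)
    qed
    have "g ` {\<sigma>..\<tau>} \<subseteq> \<Omega>T"
    proof (rule ess_maximal[OF ess connI])
      have "g \<sigma> \<in> g ` {\<sigma>..\<tau>}" using st by auto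
      then show "g ` {\<sigma>..\<tau>} \<inter> \<Omega>T \<noteq> {}" using gs by blast
    qed (use seg fUT gO s0 t1 st in auto)
    then have "g \<tau> \<in> \<Omega>T" using st by auto
    then show False using \<tau>(1) by (simp add: S_def)
  qed
  then show ?thesis using s0 s1 upto ay(1) by (intro bexI[of _ \<sigma>]) auto
qed

lemma infdist_pos_open:
  assumes "open \<Omega>" "x \<in> \<Omega>" "frontier \<Omega> \<noteq> {}"
  shows "0 < infdist x (frontier \<Omega>)"
proof -
  have "x \<notin> frontier \<Omega>" using assms by (auto simp: frontier_def interior_open)
  then have "infdist x (frontier \<Omega>) \<noteq> 0" using in_closed_iff_infdist_zero[OF frontier_closed assms(3)] by blast
  then show ?thesis using infdist_nonneg by (metis less_eq_real_def)
qed

lemma qh_lower: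
  fixes f :: "real \<times> (real^'m::finite) \<Rightarrow> real \<times> (real^'m)"
  assumes ess: "essential_tube \<Omega> f l r c \<Omega>T" and op: "open \<Omega>" and cn: "connected \<Omega>"
    and z0: "z0 \<in> \<Omega>" "z0 \<notin> \<Omega>T" and z: "f (t, y) \<in> \<Omega>T" and t: "t \<in> {0..l}"
  shows "min t (l - t) / (2 * r) \<le> qh_dist \<Omega> (f (t, y)) z0"
proof -
  note B = ess_basic[OF ess]
  let ?z = "f (t, y)"
  let ?G = "{g. rectifiable_path g \<and> path_image g \<subseteq> \<Omega> \<and> pathstart g = ?z \<and> pathfinish g = z0}"
  let ?H = "\<lambda>\<zeta>. 1 / infdist \<zeta> (frontier \<Omega>)"
  define b where "b = min t (l - t) / (2 * r)"
  have b0: "0 \<le> b" unfolding b_def using t B(2) by auto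
  have zO: "?z \<in> \<Omega>" using z ess_sub[OF ess] by auto
  have Fne: "frontier \<Omega> \<noteq> {}" using ess_wall_dist(1)[OF ess op z] .
  have low: "ennreal b \<le> arclength_integral ?H g" if g: "g \<in> ?G" for g
  proof -
    have rg: "rectifiable_path g" and pg: "path g" and pi: "path_image g \<subseteq> \<Omega>"
      and g0: "g 0 = ?z" and g1: "g 1 = z0"
      using g by (auto simp: rectifiable_path_iff pathstart_def pathfinish_def)
    obtain \<sigma> a y' where \<sigma>: "\<sigma> \<in> {0..1}" "\<forall>\<tau>\<in>{0..\<sigma>}. g \<tau> \<in> \<Omega>T" "a = 0 \<or> a = l" "g \<sigma> = f (a, y')"
    proof -
      have "g 0 \<in> \<Omega>T" "g 1 \<notin> \<Omega>T" using g0 g1 z z0 by auto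
      from ess_exit[OF ess pg pi this] show ?thesis using that by blast
    qed
    have hb: "1 / (2 * r) \<le> ?H (g \<tau>)" if "\<tau> \<in> {0<..\<sigma>}" for \<tau>
    proof -
      have "g \<tau> \<in> \<Omega>T" using \<sigma>(2) that by auto
      then have "0 < infdist (g \<tau>) (frontier \<Omega>)" "infdist (g \<tau>) (frontier \<Omega>) \<le> 2 * r"
        using ess_wall_dist[OF ess op] by auto
      then show ?thesis by (intro frac_le) auto
    qed
    have "ennreal (1 / (2 * r) * dist (g \<sigma>) (g 0)) \<le> arclength_integral ?H g"
      by (rule arclength_lower[OF rg]) (use \<sigma>(1) B(2) hb in auto)
    moreover have "min t (l - t) \<le> dist (g \<sigma>) (g 0)"
    proof -
      have "dist (g \<sigma>) (g 0) = dist (a, y') (t, y)" using \<sigma>(4) g0 B(4) by (simp add: rigid_def)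
      moreover have "dist a t \<le> dist (a, y') (t, y)" using dist_fst_le[of "(a, y')" "(t, y)"] by simp
      moreover have "min t (l - t) \<le> dist a t" using \<sigma>(3) t by (auto simp: dist_real_def)
      ultimately show ?thesis by simp
    qed
    then have "b \<le> 1 / (2 * r) * dist (g \<sigma>) (g 0)" unfolding b_def using B(2)
      by (simp add: divide_right_mono)
    ultimately show ?thesis using ennreal_leI order_trans by blast
  qed
  obtain g0 where g0: "rectifiable_path g0" "path_image g0 \<subseteq> \<Omega>" "pathstart g0 = ?z" "pathfinish g0 = z0"
    using exists_good_path[OF op cn zO z0(1)] by blast
  have pg0: "path g0" using g0(1) by (simp add: rectifiable_path_iff)
  obtain x0 where x0: "x0 \<in> path_image g0" "\<forall>y\<in>path_image g0. infdist x0 (frontier \<Omega>) \<le> infdist y (frontier \<Omega>)"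
  proof -
    have "continuous_on (path_image g0) (\<lambda>y. infdist y (frontier \<Omega>))"
      by (intro continuous_on_infdist continuous_on_id)
    from continuous_attains_inf[OF compact_path_image[OF pg0] path_image_nonempty this]
    show ?thesis using that by blast
  qed
  define m0 where "m0 = infdist x0 (frontier \<Omega>)"
  have m0: "0 < m0" unfolding m0_def using infdist_pos_open[OF op _ Fne] x0(1) g0(2) by blast
  have "arclength_integral ?H g0 \<le> ennreal (1 / m0 * curve_variation g0 0 1)"
  proof (rule arclength_upper[OF g0(1)])
    show "0 \<le> 1 / m0" using m0 by simp
    fix \<tau> :: real assume "\<tau> \<in> {0<..1}"
    then have "g0 \<tau> \<in> path_image g0" unfolding path_image_def by auto
    then show "?H (g0 \<tau>) \<le> 1 / m0" using x0(2) m0 unfolding m0_def by (intro frac_le) auto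
  qed
  then have fin: "arclength_integral ?H g0 < top" using le_less_trans by fastforce
  have "g0 \<in> ?G" using g0 by blast
  then have INFfin: "(INF g\<in>?G. arclength_integral ?H g) < top"
    using fin by (meson INF_lower le_less_trans)
  have "ennreal b \<le> (INF g\<in>?G. arclength_integral ?H g)"
    by (rule INF_greatest) (rule low)
  then have "enn2real (ennreal b) \<le> enn2real (INF g\<in>?G. arclength_integral ?H g)"
    by (rule enn2real_mono[OF _ INFfin])
  then show ?thesis unfolding qh_dist_def b_def[symmetric] using b0 by simp
qed


lemma volume_lower:
  fixes f :: "real \<times> (real^'m::finite) \<Rightarrow> real \<times> (real^'m)"
  assumes ess: "essential_tube \<Omega> f l r c \<Omega>T" and op: "open \<Omega>"
  defines "A \<equiv> {x. fst x \<in> {l/4..3*l/4} \<and> norm (snd x) \<le> r \<and> f x \<in> \<Omega>T}"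
  shows "A \<in> sets borel" "bounded A"
    "ennreal (c * measure lebesgue (cball (0::real^'m) r) * (l/2)) \<le> emeasure lborel A"
proof -
  note B = ess_basic[OF ess]
  have Aeq: "A = (fst -` {l/4..3*l/4}) \<inter> (snd -` cball 0 r) \<inter> (f -` \<Omega>T)"
    by (auto simp: A_def)
  have mfst: "(fst :: real \<times> (real^'m) \<Rightarrow> real) \<in> borel_measurable borel"
    by (rule borel_measurable_continuous_onI) (intro continuous_intros)
  have msnd: "(snd :: real \<times> (real^'m) \<Rightarrow> real^'m) \<in> borel_measurable borel"
    by (rule borel_measurable_continuous_onI) (intro continuous_intros)
  have mf: "f \<in> borel_measurable borel"
    by (rule borel_measurable_continuous_onI[OF rigid_cont[OF B(4)]])
  show Ab: "A \<in> sets borel"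
    unfolding Aeq
    using measurable_sets[OF mfst borel_closed[OF closed_atLeastAtMost[of "l/4" "3*l/4"]]]
      measurable_sets[OF msnd borel_closed[OF closed_cball[of 0 r]]]
      measurable_sets[OF mf ess_borel[OF ess op]]
    by (intro sets.Int) auto
  have Asub: "A \<subseteq> {l/4..3*l/4} \<times> cball 0 r" by (auto simp: A_def mem_Times_iff)
  show "bounded A"
    by (rule bounded_subset[OF _ Asub]) (intro bounded_Times bounded_cball bounded_closed_interval)
  define Mr where "Mr = measure lebesgue (cball (0::real^'m) r)"
  have slice_eq: "Pair t -` A = (if t \<in> {l/4..3*l/4} then tube_slice f r \<Omega>T t else {})" for t
    by (auto simp: A_def tube_slice_def)
  have slice_ge: "ennreal (c * Mr) * indicator {l/4..3*l/4} t \<le> emeasure lborel (Pair t -` A)" for t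
  proof (cases "t \<in> {l/4..3*l/4}")
    case True
    have sb: "Pair t -` A \<in> sets borel"
      using measurable_sets[OF borel_measurable_continuous_onI[of "Pair t"] Ab] by (simp add: continuous_intros)
    have sbd: "bounded (Pair t -` A)"
      by (rule bounded_subset[of "cball 0 r"]) (auto simp: A_def)
    have "emeasure lborel (Pair t -` A) = ennreal (measure lebesgue (Pair t -` A))"
      by (rule emeasure_lborel_measure[OF sb sbd])
    moreover have "c * Mr \<le> measure lebesgue (Pair t -` A)"
    proof -
      have "t \<in> {0..l}" using True B(1) by auto
      then have "c * Mr \<le> measure lebesgue (tube_slice f r \<Omega>T t)" unfolding Mr_def by (rule B(7))
      then show ?thesis using True by (simp add: slice_eq)
    qed
    ultimately show ?thesis using True by (simp add: ennreal_leI)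
  qed simp
  have "emeasure lborel A = emeasure (lborel \<Otimes>\<^sub>M lborel) A" by (simp add: lborel_prod)
  also have "\<dots> = (\<integral>\<^sup>+t. emeasure lborel (Pair t -` A) \<partial>lborel)"
    by (rule lborel.emeasure_pair_measure_alt) (unfold lborel_prod, use Ab in simp)
  finally have eA: "emeasure lborel A = (\<integral>\<^sup>+t. emeasure lborel (Pair t -` A) \<partial>lborel)" .
  have "(\<integral>\<^sup>+t. ennreal (c * Mr) * indicator {l/4..3*l/4} t \<partial>lborel) \<le> emeasure lborel A"
    unfolding eA by (rule nn_integral_mono) (rule slice_ge)
  moreover have "(\<integral>\<^sup>+t. ennreal (c * Mr) * indicator {l/4..3*l/4} t \<partial>lborel) = ennreal (c * Mr) * ennreal (l/2)"
    using B(1) by (simp add: nn_integral_cmult_indicator)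
  moreover have "ennreal (c * Mr * (l/2)) = ennreal (c * Mr) * ennreal (l/2)"
    using B(1) B(3) by (intro ennreal_mult) (auto simp: Mr_def)
  ultimately show "ennreal (c * measure lebesgue (cball (0::real^'m) r) * (l/2)) \<le> emeasure lborel A"
    unfolding Mr_def by simp
qed

theorem mainTheorem1:
  fixes s :: real
  assumes "1 \<le> s"
  shows "\<exists>C>0. \<forall>(\<Omega>::(real \<times> (real^'m)) set) f l r c \<Omega>T z0.
           open \<Omega> \<and> connected \<Omega> \<and> essential_tube \<Omega> f l r c \<Omega>T \<and> z0 \<in> \<Omega> \<and> z0 \<notin> \<Omega>T \<longrightarrow>
           (\<integral>\<^sup>+ z\<in>\<Omega>T. ennreal (qh_dist \<Omega> z z0 powr s) \<partial>lebesgue)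
             \<ge> ennreal (C * c * r ^ (CARD('m) + 1) * (l / r) powr (s + 1))"
proof -
  define \<kappa> where "\<kappa> = measure lborel (cball (0::real^'m) 1)"
  have \<kappa>: "0 < \<kappa>" by (simp add: \<kappa>_def)
  have Mr: "measure lebesgue (cball (0::real^'m) r) = \<kappa> * r ^ CARD('m)" if "0 \<le> r" for r
    using that by (simp add: \<kappa>_def content_cball)
  define C where "C = \<kappa> / (2 * 8 powr s)"
  show ?thesis
  proof (intro exI[of _ C] conjI allI impI)
    show "0 < C" using \<kappa> by (simp add: C_def)
    fix \<Omega> :: "(real \<times> (real^'m)) set" and f l r c \<Omega>T z0
    assume H: "open \<Omega> \<and> connected \<Omega> \<and> essential_tube \<Omega> f l r c \<Omega>T \<and> z0 \<in> \<Omega> \<and> z0 \<notin> \<Omega>T"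
    then have op: "open \<Omega>" and cn: "connected \<Omega>" and ess: "essential_tube \<Omega> f l r c \<Omega>T"
      and z0: "z0 \<in> \<Omega>" "z0 \<notin> \<Omega>T" by auto
    note B = ess_basic[OF ess]
    define A where "A = {x. fst x \<in> {l/4..3*l/4} \<and> norm (snd x) \<le> r \<and> f x \<in> \<Omega>T}"
    have Ab: "A \<in> sets borel" and Abd: "bounded A"
      and Avol: "ennreal (c * measure lebesgue (cball (0::real^'m) r) * (l/2)) \<le> emeasure lborel A"
      using volume_lower[OF ess op] unfolding A_def by auto
    have fAb: "f ` A \<in> sets borel" and eqA: "emeasure lborel (f ` A) = emeasure lborel A"
      using rigid_measure[OF B(4) Ab Abd] by auto
    define b where "b = l / (8 * r)"
    have b0: "0 \<le> b" using B(1,2) by (simp add: b_def)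
    have pt: "ennreal (b powr s) * indicator (f ` A) z \<le> ennreal (qh_dist \<Omega> z z0 powr s) * indicator \<Omega>T z" for z
    proof (cases "z \<in> f ` A")
      case True
      then obtain t y where ty: "z = f (t, y)" "t \<in> {l/4..3*l/4}" "f (t, y) \<in> \<Omega>T"
        unfolding A_def by auto
      have tl: "t \<in> {0..l}" using ty(2) B(1) by auto
      have "min t (l - t) / (2 * r) \<le> qh_dist \<Omega> (f (t, y)) z0"
        by (rule qh_lower[OF ess op cn z0 ty(3) tl])
      moreover have "b \<le> min t (l - t) / (2 * r)"
        unfolding b_def using ty(2) B(2) by (auto simp: field_simps)
      ultimately have "b \<le> qh_dist \<Omega> z z0" using ty(1) by simp
      then have "b powr s \<le> qh_dist \<Omega> z z0 powr s"
        using b0 assms by (intro powr_mono2) auto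
      then show ?thesis using True ty by (simp add: ennreal_leI)
    qed simp
    have fAl: "f ` A \<in> sets lebesgue" using fAb by simp
    have "ennreal (C * c * r ^ (CARD('m) + 1) * (l / r) powr (s + 1))
        = ennreal (b powr s) * ennreal (c * measure lebesgue (cball (0::real^'m) r) * (l/2))"
    proof -
      have lr: "0 < l / r" using B(1,2) by simp
      have "C * c * r ^ (CARD('m) + 1) * (l / r) powr (s + 1)
          = b powr s * (c * measure lebesgue (cball (0::real^'m) r) * (l/2))"
      proof -
        have "(l / r) powr (s + 1) = (l / r) powr s * (l / r)" using lr B(1,2) by (simp add: powr_add)
        moreover have "b powr s = (l / r) powr s / 8 powr s"
          unfolding b_def using lr by (simp add: powr_divide[symmetric] field_simps)
        moreover have "measure lebesgue (cball (0::real^'m) r) = \<kappa> * r ^ CARD('m)"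
          using Mr B(2) by simp
        ultimately show ?thesis using B(2) by (simp add: C_def field_simps)
      qed
      then have "ennreal (C * c * r ^ (CARD('m) + 1) * (l / r) powr (s + 1))
          = ennreal (b powr s * (c * measure lebesgue (cball (0::real^'m) r) * (l/2)))"
        by (rule arg_cong)
      also have "\<dots> = ennreal (b powr s) * ennreal (c * measure lebesgue (cball (0::real^'m) r) * (l/2))"
        by (rule ennreal_mult') simp
      finally show ?thesis .
    qed
    also have "\<dots> \<le> ennreal (b powr s) * emeasure lebesgue (f ` A)"
      using Avol eqA fAb by (intro mult_left_mono) auto
    also have "\<dots> = (\<integral>\<^sup>+ z. ennreal (b powr s) * indicator (f ` A) z \<partial>lebesgue)"
      by (rule nn_integral_cmult_indicator[symmetric, OF fAl])
    also have "\<dots> \<le> (\<integral>\<^sup>+ z\<in>\<Omega>T. ennreal (qh_dist \<Omega> z z0 powr s) \<partial>lebesgue)"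
      by (rule nn_integral_mono) (rule pt)
    finally show "(\<integral>\<^sup>+ z\<in>\<Omega>T. ennreal (qh_dist \<Omega> z z0 powr s) \<partial>lebesgue)
             \<ge> ennreal (C * c * r ^ (CARD('m) + 1) * (l / r) powr (s + 1))" .
  qed
qed


end
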